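(* Let $W\in[0,1]^{k\times k}$ be a symmetric positive semidefinite matrix with unit diagonal, $\mu>0$, and consider linear utilities $u_i({\boldsymbol\theta})=W_i^\top{\boldsymbol\theta}$ with thresholds $\mu_i=\mu$ and strategy space $\mathbb{R}_+^k$. Let ${\boldsymbol\theta}^{\mathrm{eq}}$ be an optimal stable equilibrium, $I=\{i:\theta^{\mathrm{eq}}_i=0\}$, $\bar W$ and $\bar{\boldsymbol\theta}^{\mathrm{eq}}$ the restrictions of $W$ (rows and columns) and ${\boldsymbol\theta}^{\mathrm{eq}}$ to $[k]\setminus I$, and $B$ the submatrix of $W$ with rows indexed by $[k]\setminus I$ and columns indexed by $I$. If $\bar{\boldsymbol\theta}$ is an optimal solution of $\min_{\bf x}\{\mathbf{1}^\top{\bf x}:\bar W{\bf x}\ge\mu\mathbf{1},\ {\bf x}\ge\mathbf{0}\}$, then $B^\top(\bar{\boldsymbol\theta}^{\mathrm{eq}}-\bar{\boldsymbol\theta})=\mathbf{0}$.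
   Context: $W_i$ is the $i$-th column of $W$. ${\boldsymbol\theta}$ is feasible if $u_i({\boldsymbol\theta})\ge\mu$ for all $i$. A feasible ${\boldsymbol\theta}\in\mathbb{R}_+^k$ is a stable equilibrium if for no $i$ is there $0\le\theta_i'<\theta_i$ with $u_i(\theta_i',{\boldsymbol\theta}_{-i})\ge\mu$ (${\boldsymbol\theta}$ with $i$-th entry replaced). An optimal stable equilibrium minimizes $\mathbf{1}^\top{\boldsymbol\theta}$ among stable equilibria. *)

theory Defs
  imports Complex_Main
begin

definition psd :: "nat \<Rightarrow> (nat \<Rightarrow> nat \<Rightarrow> real) \<Rightarrow> bool" where
  "psd k W \<longleftrightarrow> (\<forall>x :: nat \<Rightarrow> real. 0 \<le> (\<Sum>i<k. \<Sum>j<k. x i * W i j * x j))"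

definition util :: "nat \<Rightarrow> (nat \<Rightarrow> nat \<Rightarrow> real) \<Rightarrow> nat \<Rightarrow> (nat \<Rightarrow> real) \<Rightarrow> real" where
  "util k W i \<theta> = (\<Sum>j<k. W j i * \<theta> j)"

definition feasible :: "nat \<Rightarrow> (nat \<Rightarrow> nat \<Rightarrow> real) \<Rightarrow> real \<Rightarrow> (nat \<Rightarrow> real) \<Rightarrow> bool" where
  "feasible k W \<mu> \<theta> \<longleftrightarrow> (\<forall>i<k. util k W i \<theta> \<ge> \<mu>)"

definition stable_eq :: "nat \<Rightarrow> (nat \<Rightarrow> nat \<Rightarrow> real) \<Rightarrow> real \<Rightarrow> (nat \<Rightarrow> real) \<Rightarrow> bool" where
  "stable_eq k W \<mu> \<theta> \<longleftrightarrow>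
     (\<forall>i<k. 0 \<le> \<theta> i) \<and> feasible k W \<mu> \<theta> \<and>
     (\<forall>i<k. \<not> (\<exists>t. 0 \<le> t \<and> t < \<theta> i \<and> util k W i (\<theta>(i := t)) \<ge> \<mu>))"

definition optimal_stable_eq :: "nat \<Rightarrow> (nat \<Rightarrow> nat \<Rightarrow> real) \<Rightarrow> real \<Rightarrow> (nat \<Rightarrow> real) \<Rightarrow> bool" where
  "optimal_stable_eq k W \<mu> \<theta> \<longleftrightarrow>
     stable_eq k W \<mu> \<theta> \<and>
     (\<forall>\<theta>'. stable_eq k W \<mu> \<theta>' \<longrightarrow> (\<Sum>i<k. \<theta> i) \<le> (\<Sum>i<k. \<theta>' i))"

definition lp_feasible :: "nat set \<Rightarrow> (nat \<Rightarrow> nat \<Rightarrow> real) \<Rightarrow> real \<Rightarrow> (nat \<Rightarrow> real) \<Rightarrow> bool" where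
  "lp_feasible J W \<mu> x \<longleftrightarrow>
     (\<forall>i\<in>J. (\<Sum>j\<in>J. W i j * x j) \<ge> \<mu>) \<and> (\<forall>j\<in>J. 0 \<le> x j)"

definition lp_optimal :: "nat set \<Rightarrow> (nat \<Rightarrow> nat \<Rightarrow> real) \<Rightarrow> real \<Rightarrow> (nat \<Rightarrow> real) \<Rightarrow> bool" where
  "lp_optimal J W \<mu> x \<longleftrightarrow>
     lp_feasible J W \<mu> x \<and> (\<forall>y. lp_feasible J W \<mu> y \<longrightarrow> (\<Sum>j\<in>J. x j) \<le> (\<Sum>j\<in>J. y j))"

end

theory Submission
  imports Defs
begin

lemma my_if_delta: "(if P then (t::real) else 0) * y = (if P then t * y else 0)"
  by simp

theorem lemma4:
  fixes k :: nat and W :: "nat \<Rightarrow> nat \<Rightarrow> real" and \<mu> :: real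
    and \<theta>eq \<theta>bar :: "nat \<Rightarrow> real"
  assumes W_range: "\<forall>i<k. \<forall>j<k. 0 \<le> W i j \<and> W i j \<le> 1"
    and W_sym: "\<forall>i<k. \<forall>j<k. W i j = W j i"
    and W_psd: "psd k W"
    and W_diag: "\<forall>i<k. W i i = 1"
    and mu_pos: "\<mu> > 0"
    and eq: "optimal_stable_eq k W \<mu> \<theta>eq"
    and lp: "lp_optimal ({..<k} - {i. i < k \<and> \<theta>eq i = 0}) W \<mu> \<theta>bar"
  shows "\<forall>i \<in> {i. i < k \<and> \<theta>eq i = 0}.
           (\<Sum>j \<in> {..<k} - {i. i < k \<and> \<theta>eq i = 0}. W j i * (\<theta>eq j - \<theta>bar j)) = 0"
proof -
  define I where "I = {i. i < k \<and> \<theta>eq i = 0}"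
  define J where "J = {..<k} - I"
  have finJ: "finite J" unfolding J_def by simp
  have JK: "J \<subseteq> {..<k}" unfolding J_def by auto
  have st: "stable_eq k W \<mu> \<theta>eq" using eq unfolding optimal_stable_eq_def by simp
  have nonneg: "\<And>i. i < k \<Longrightarrow> 0 \<le> \<theta>eq i" using st unfolding stable_eq_def by simp
  have posJ: "\<And>i. i \<in> J \<Longrightarrow> 0 < \<theta>eq i"
    using nonneg unfolding J_def I_def by (auto simp: less_le)
  have feas: "\<And>i. i < k \<Longrightarrow> util k W i \<theta>eq \<ge> \<mu>"
    using st unfolding stable_eq_def feasible_def by simp
  have nored: "\<And>i t. i < k \<Longrightarrow> 0 \<le> t \<Longrightarrow> t < \<theta>eq i \<Longrightarrow> util k W i (\<theta>eq(i := t)) < \<mu>"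
    using st unfolding stable_eq_def by (meson not_le)
  have utilupd: "util k W i (\<theta>eq(i := t)) = util k W i \<theta>eq - \<theta>eq i + t" if "i < k" for i t
  proof -
    have "util k W i (\<theta>eq(i := t)) = (\<Sum>j<k. W j i * \<theta>eq j) + W i i * (t - \<theta>eq i)"
    proof -
      have "util k W i (\<theta>eq(i := t)) = W i i * t + (\<Sum>j\<in>{..<k} - {i}. W j i * \<theta>eq j)"
        unfolding util_def using that by (subst sum.remove[of _ i]) auto
      moreover have "(\<Sum>j<k. W j i * \<theta>eq j) = W i i * \<theta>eq i + (\<Sum>j\<in>{..<k} - {i}. W j i * \<theta>eq j)"
        using that by (subst sum.remove[of _ i]) auto
      ultimately show ?thesis by (simp add: algebra_simps)
    qed
    thus ?thesis using W_diag that unfolding util_def by simp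
  qed
  have utilJ: "util k W i \<theta>eq = \<mu>" if "i \<in> J" for i
  proof (rule ccontr)
    assume "util k W i \<theta>eq \<noteq> \<mu>"
    have ik: "i < k" using that JK by auto
    hence gt: "util k W i \<theta>eq > \<mu>" using feas \<open>util k W i \<theta>eq \<noteq> \<mu>\<close> by force
    define t where "t = max 0 (\<theta>eq i - (util k W i \<theta>eq - \<mu>))"
    have "util k W i (\<theta>eq(i := t)) < \<mu>"
      using nored[OF ik, of t] posJ[OF that] gt unfolding t_def by auto
    moreover have "util k W i (\<theta>eq(i := t)) \<ge> \<mu>" using utilupd[OF ik] unfolding t_def by auto
    ultimately show False by simp
  qed
  have eqJ: "(\<Sum>j\<in>J. W i j * \<theta>eq j) = \<mu>" if "i \<in> J" for i
  proof -
    have ik: "i < k" using that JK by auto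
    have "(\<Sum>j<k. W j i * \<theta>eq j) = (\<Sum>j\<in>J. W j i * \<theta>eq j)"
      by (rule sum.mono_neutral_right) (auto simp: J_def I_def)
    also have "\<dots> = (\<Sum>j\<in>J. W i j * \<theta>eq j)"
      using W_sym ik JK by (intro sum.cong) auto
    finally show ?thesis using utilJ[OF that] unfolding util_def by simp
  qed
  have lpf: "lp_feasible J W \<mu> \<theta>bar" and lpo: "\<And>y. lp_feasible J W \<mu> y \<Longrightarrow> sum \<theta>bar J \<le> sum y J"
    using lp unfolding lp_optimal_def J_def I_def by auto
  have eqf: "lp_feasible J W \<mu> \<theta>eq"
    unfolding lp_feasible_def using eqJ posJ by (auto intro: less_imp_le)
  have barJ: "\<And>i. i \<in> J \<Longrightarrow> (\<Sum>j\<in>J. W i j * \<theta>bar j) \<ge> \<mu>"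
    and barnn: "\<And>j. j \<in> J \<Longrightarrow> 0 \<le> \<theta>bar j"
    using lpf unfolding lp_feasible_def by auto
  have key: "\<mu> * sum \<theta>bar J = (\<Sum>j\<in>J. \<theta>eq j * (\<Sum>i\<in>J. W j i * \<theta>bar i))"
  proof -
    have "\<mu> * sum \<theta>bar J = (\<Sum>i\<in>J. \<theta>bar i * (\<Sum>j\<in>J. W i j * \<theta>eq j))"
      using eqJ by (simp add: sum_distrib_left mult.commute)
    also have "\<dots> = (\<Sum>i\<in>J. \<Sum>j\<in>J. \<theta>bar i * W i j * \<theta>eq j)"
      by (simp add: sum_distrib_left mult.assoc)
    also have "\<dots> = (\<Sum>j\<in>J. \<Sum>i\<in>J. \<theta>bar i * W i j * \<theta>eq j)"
      by (rule sum.swap)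
    also have "\<dots> = (\<Sum>j\<in>J. \<theta>eq j * (\<Sum>i\<in>J. W j i * \<theta>bar i))"
      unfolding sum_distrib_left using W_sym JK
      by (intro sum.cong refl) (auto simp: subset_iff)
    finally show ?thesis .
  qed
  have "\<mu> * sum \<theta>bar J \<ge> \<mu> * sum \<theta>eq J"
  proof -
    have "(\<Sum>j\<in>J. \<theta>eq j * (\<Sum>i\<in>J. W j i * \<theta>bar i)) \<ge> (\<Sum>j\<in>J. \<theta>eq j * \<mu>)"
      using barJ posJ by (intro sum_mono mult_left_mono) (auto intro: less_imp_le)
    thus ?thesis using key by (simp add: sum_distrib_left mult.commute)
  qed
  hence "sum \<theta>bar J \<ge> sum \<theta>eq J" using mu_pos by simp
  hence sumeq: "sum \<theta>bar J = sum \<theta>eq J" using lpo[OF eqf] by simp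
  have "(\<Sum>j\<in>J. \<theta>eq j * ((\<Sum>i\<in>J. W j i * \<theta>bar i) - \<mu>)) = 0"
    using key sumeq by (simp add: right_diff_distrib sum_subtractf sum_distrib_left sum_distrib_right mult.commute)
  note S0 = this
  have "\<forall>j\<in>J. \<theta>eq j * ((\<Sum>i\<in>J. W j i * \<theta>bar i) - \<mu>) = 0"
  proof -
    have h: "\<And>j. j \<in> J \<Longrightarrow> 0 \<le> \<theta>eq j * ((\<Sum>i\<in>J. W j i * \<theta>bar i) - \<mu>)"
      using barJ posJ by (simp add: less_imp_le)
    show ?thesis using sum_nonneg_eq_0_iff[OF finJ h] S0 by simp
  qed
  hence barEq: "\<And>j. j \<in> J \<Longrightarrow> (\<Sum>i\<in>J. W j i * \<theta>bar i) = \<mu>"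
    using posJ by fastforce
  define d where "d j = (if j \<in> J then \<theta>eq j - \<theta>bar j else 0)" for j
  have Wd: "(\<Sum>j<k. W i j * d j) = 0" if "i \<in> J" for i
  proof -
    have "(\<Sum>j<k. W i j * d j) = (\<Sum>j\<in>J. W i j * (\<theta>eq j - \<theta>bar j))"
      unfolding d_def using JK by (simp add: if_distrib sum.If_cases Int_absorb1)
    also have "\<dots> = 0" using eqJ[OF that] barEq[OF that]
      by (simp add: right_diff_distrib sum_subtractf)
    finally show ?thesis .
  qed
  have quad0: "(\<Sum>i<k. d i * (\<Sum>j<k. W i j * d j)) = 0"
  proof (rule sum.neutral, rule ballI)
    fix i show "d i * (\<Sum>j<k. W i j * d j) = 0"
      by (cases "i \<in> J") (simp_all add: Wd, simp add: d_def)
  qed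
  show ?thesis
  proof
    fix i0 assume "i0 \<in> {i. i < k \<and> \<theta>eq i = 0}"
    hence i0k: "i0 < k" and i0J: "i0 \<notin> J" unfolding J_def I_def by auto
    define a where "a = (\<Sum>j<k. W i0 j * d j)"
    have a2: "(\<Sum>i<k. d i * W i i0) = a"
      unfolding a_def using W_sym i0k by (intro sum.cong) auto
    define t where "t = - a"
    define x where "x j = d j + (if j = i0 then t else 0)" for j
    have "0 \<le> (\<Sum>i<k. \<Sum>j<k. x i * W i j * x j)" using W_psd unfolding psd_def by blast
    also have "(\<Sum>i<k. \<Sum>j<k. x i * W i j * x j) = (\<Sum>i<k. x i * ((\<Sum>j<k. W i j * d j) + W i i0 * t))"
    proof (rule sum.cong[OF refl])
      fix i
      have "(\<Sum>j<k. x i * W i j * x j) = x i * (\<Sum>j<k. W i j * x j)"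
        by (simp add: sum_distrib_left mult.assoc)
      also have "(\<Sum>j<k. W i j * x j) = (\<Sum>j<k. W i j * d j) + (\<Sum>j<k. W i j * (if j = i0 then t else 0))"
        unfolding x_def by (simp add: distrib_left sum.distrib)
      also have "(\<Sum>j<k. W i j * (if j = i0 then t else 0)) = W i i0 * t"
        using i0k by (simp add: if_distrib sum.delta cong: if_cong)
      finally show "(\<Sum>j<k. x i * W i j * x j) = x i * ((\<Sum>j<k. W i j * d j) + W i i0 * t)" .
    qed
    also have "\<dots> = (\<Sum>i<k. d i * ((\<Sum>j<k. W i j * d j) + W i i0 * t)) + t * (a + W i0 i0 * t)"
    proof -
      have "(\<Sum>i<k. x i * ((\<Sum>j<k. W i j * d j) + W i i0 * t)) =
        (\<Sum>i<k. d i * ((\<Sum>j<k. W i j * d j) + W i i0 * t)) + (\<Sum>i<k. (if i = i0 then t else 0) * ((\<Sum>j<k. W i j * d j) + W i i0 * t))"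
        unfolding x_def by (simp add: distrib_right sum.distrib)
      moreover have "(\<Sum>i<k. (if i = i0 then t else 0) * ((\<Sum>j<k. W i j * d j) + W i i0 * t)) = t * (a + W i0 i0 * t)"
        using i0k unfolding a_def by (simp only: my_if_delta sum.delta, simp)
      ultimately show ?thesis by simp
    qed
    also have "(\<Sum>i<k. d i * ((\<Sum>j<k. W i j * d j) + W i i0 * t)) = t * a"
    proof -
      have "(\<Sum>i<k. d i * ((\<Sum>j<k. W i j * d j) + W i i0 * t)) =
         (\<Sum>i<k. d i * (\<Sum>j<k. W i j * d j)) + t * (\<Sum>i<k. d i * W i i0)"
        by (simp add: distrib_left sum.distrib sum_distrib_left mult.commute mult.left_commute)
      thus ?thesis using quad0 a2 by simp
    qed
    also have "t * a + t * (a + W i0 i0 * t) = - a * a" using W_diag i0k unfolding t_def by (simp add: algebra_simps)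
    finally have "a = 0" by (simp add: mult_le_0_iff, linarith)
    have "(\<Sum>j\<in>J. W j i0 * (\<theta>eq j - \<theta>bar j)) = a"
      unfolding a_def d_def using JK W_sym i0k
      by (simp add: if_distrib sum.If_cases Int_absorb1)
    thus "(\<Sum>j \<in> {..<k} - {i. i < k \<and> \<theta>eq i = 0}. W j i0 * (\<theta>eq j - \<theta>bar j)) = 0"
      using \<open>a = 0\<close> unfolding J_def I_def by simp
  qed
qed

end
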